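(* Let $k\ge1$ be even and let $Q_k\in S_k$. Then the generating function $\sum_{n\ge0}\#_{\mathcal A}\{(0,0)\xrightarrow{n}Q_k\}t^n$ is a rational function of $t$, and its poles of smallest modulus are at $t=\pm\big(2\cos(\tfrac{\pi}{2+k})\big)^{-1}$.
   Context: Let $\mathbb N=\{0,1,2,\dots\}$ and $\mathcal A=\{(-1,1),(1,1),(1,-1)\}$. A quarter-plane walk of length $n$ with steps in $\mathcal A$ is a sequence $p_0=(0,0),p_1,\dots,p_n$ of points of $\mathbb N^2$ with $p_m-p_{m-1}\in\mathcal A$ for all $m$; $\#_{\mathcal A}\{(0,0)\xrightarrow{n}(i,j)\}$ is the number of such walks ending at $(i,j)$. For $k\ge0$, $S_k=\{(k-i,i):0\le i\le k\}$. *)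

theory Defs
  imports Complex_Main "HOL-Computational_Algebra.Polynomial_FPS"
begin

definition stepsA :: "(int \<times> int) set" where
  "stepsA = {(-1,1), (1,1), (1,-1)}"

text \<open>Quarter-plane walks of length n from (0,0), represented as the list of
  visited points p_0, ..., p_n (points of N^2 encoded as nonnegative integer pairs).\<close>
definition qp_walks :: "nat \<Rightarrow> (int \<times> int) list set" where
  "qp_walks n = {ps. length ps = Suc n \<and> ps ! 0 = (0,0) \<and>
      (\<forall>m<n. (fst (ps ! Suc m) - fst (ps ! m), snd (ps ! Suc m) - snd (ps ! m)) \<in> stepsA) \<and>
      (\<forall>p\<in>set ps. 0 \<le> fst p \<and> 0 \<le> snd p)}"

definition walk_count :: "nat \<Rightarrow> int \<times> int \<Rightarrow> nat" where
  "walk_count n Q = card {ps \<in> qp_walks n. last ps = Q}"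

definition walk_gf :: "int \<times> int \<Rightarrow> complex fps" where
  "walk_gf Q = Abs_fps (\<lambda>n. of_nat (walk_count n Q))"

end

theory Submission
  imports Defs "HOL-Complex_Analysis.Complex_Analysis" "HOL-Library.Function_Algebras"
    "HOL-Computational_Algebra.Polynomial_Factorial" "HOL-Computational_Algebra.Field_as_Ring"
begin


lemma qp_walks_0: "qp_walks 0 = {[(0,0)]}"
proof -
  have "ps = [(0,0)]" if "length ps = 1" "ps ! 0 = (0,0)" for ps :: "(int \<times> int) list"
    using that by (cases ps) auto
  then show ?thesis by (auto simp: qp_walks_def)
qed

lemma walk_count_0: "walk_count 0 Q = (if Q = (0,0) then 1 else 0)"
proof -
  have "{ps. ps = [(0::int,0::int)] \<and> last ps = (0,0)} = {[(0,0)]}" by auto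
  then show ?thesis by (auto simp: walk_count_def qp_walks_0)
qed

lemma qp_walks_Suc:
  "ps \<in> qp_walks (Suc n) \<longleftrightarrow>
     (\<exists>ps' P. ps = ps' @ [P] \<and> ps' \<in> qp_walks n \<and>
        (fst P - fst (last ps'), snd P - snd (last ps')) \<in> stepsA \<and> 0 \<le> fst P \<and> 0 \<le> snd P)"
proof
  assume A: "ps \<in> qp_walks (Suc n)"
  then have len: "length ps = Suc (Suc n)" by (simp add: qp_walks_def)
  define ps' where "ps' = butlast ps"
  define P where "P = last ps"
  have ne: "ps \<noteq> []" using len by auto
  have eq: "ps = ps' @ [P]" using ne by (simp add: ps'_def P_def)
  have len': "length ps' = Suc n" using len by (simp add: ps'_def)
  have nth': "ps' ! m = ps ! m" if "m < Suc n" for m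
    using that len' eq by (metis nth_append_left)
  have lastp: "last ps' = ps ! n"
  proof -
    have "ps' \<noteq> []" using len' by auto
    then have "last ps' = ps' ! n" using len' by (simp add: last_conv_nth)
    then show ?thesis using nth' by simp
  qed
  have lastP: "P = ps ! Suc n" using eq len' by (simp add: nth_append)
  have "ps' \<in> qp_walks n"
    using A len' nth' unfolding qp_walks_def
    by (auto simp: ps'_def in_set_butlastD)
  moreover have "(fst P - fst (last ps'), snd P - snd (last ps')) \<in> stepsA"
    using A lastp lastP unfolding qp_walks_def by auto
  moreover have "0 \<le> fst P \<and> 0 \<le> snd P"
    using A ne unfolding qp_walks_def P_def by auto
  ultimately show "\<exists>ps' P. ps = ps' @ [P] \<and> ps' \<in> qp_walks n \<and>
        (fst P - fst (last ps'), snd P - snd (last ps')) \<in> stepsA \<and> 0 \<le> fst P \<and> 0 \<le> snd P"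
    using eq by blast
next
  assume "\<exists>ps' P. ps = ps' @ [P] \<and> ps' \<in> qp_walks n \<and>
        (fst P - fst (last ps'), snd P - snd (last ps')) \<in> stepsA \<and> 0 \<le> fst P \<and> 0 \<le> snd P"
  then obtain ps' P where eq: "ps = ps' @ [P]" and W: "ps' \<in> qp_walks n"
    and st: "(fst P - fst (last ps'), snd P - snd (last ps')) \<in> stepsA"
    and pos: "0 \<le> fst P" "0 \<le> snd P" by blast
  have len': "length ps' = Suc n" using W by (simp add: qp_walks_def)
  have lastp: "last ps' = ps' ! n"
  proof -
    have "ps' \<noteq> []" using len' by auto
    then show ?thesis using len' by (simp add: last_conv_nth)
  qed
  show "ps \<in> qp_walks (Suc n)"
    unfolding qp_walks_def
  proof (intro CollectI conjI allI impI ballI)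
    show "length ps = Suc (Suc n)" using eq len' by simp
    show "ps ! 0 = (0,0)" using eq len' W by (simp add: nth_append qp_walks_def)
  next
    fix m assume m: "m < Suc n"
    show "(fst (ps ! Suc m) - fst (ps ! m), snd (ps ! Suc m) - snd (ps ! m)) \<in> stepsA"
    proof (cases "m < n")
      case True
      then show ?thesis using W eq len' by (simp add: nth_append qp_walks_def)
    next
      case False
      then have "m = n" using m by simp
      then show ?thesis using st eq len' lastp by (simp add: nth_append)
    qed
  next
    fix p assume "p \<in> set ps"
    then show "0 \<le> fst p" using eq W pos by (auto simp: qp_walks_def)
  next
    fix p assume "p \<in> set ps"
    then show "0 \<le> snd p" using eq W pos by (auto simp: qp_walks_def)
  qed
qed

lemma finite_qp_walks: "finite (qp_walks n)"
proof (induction n)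
  case 0
  then show ?case by (simp add: qp_walks_0)
next
  case (Suc n)
  have "qp_walks (Suc n) \<subseteq>
    (\<lambda>(ps, d). ps @ [(fst (last ps) + fst d, snd (last ps) + snd d)]) ` (qp_walks n \<times> stepsA)"
  proof
    fix ps assume "ps \<in> qp_walks (Suc n)"
    then obtain ps' P where eq: "ps = ps' @ [P]" and W: "ps' \<in> qp_walks n"
      and st: "(fst P - fst (last ps'), snd P - snd (last ps')) \<in> stepsA"
      unfolding qp_walks_Suc by blast
    show "ps \<in> (\<lambda>(ps, d). ps @ [(fst (last ps) + fst d, snd (last ps) + snd d)]) ` (qp_walks n \<times> stepsA)"
      by (rule image_eqI[where x = "(ps', (fst P - fst (last ps'), snd P - snd (last ps')))"])
         (use eq W st in auto)
  qed
  moreover have "finite stepsA" by (simp add: stepsA_def)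
  ultimately show ?case using Suc finite_subset by blast
qed

lemma walk_last_nonneg: "ps \<in> qp_walks n \<Longrightarrow> 0 \<le> fst (last ps) \<and> 0 \<le> snd (last ps)"
proof -
  assume "ps \<in> qp_walks n"
  then have "ps \<noteq> []" "\<forall>p\<in>set ps. 0 \<le> fst p \<and> 0 \<le> snd p" by (auto simp: qp_walks_def)
  then show ?thesis using last_in_set by blast
qed

lemma walk_count_neg: "\<not> (0 \<le> a \<and> 0 \<le> b) \<Longrightarrow> walk_count n (a, b) = 0"
  unfolding walk_count_def using walk_last_nonneg
  by (metis (mono_tags, lifting) card.empty empty_Collect_eq fst_conv snd_conv)

lemma walk_count_Suc:
  "walk_count (Suc n) (a, b) =
     (if 0 \<le> a \<and> 0 \<le> b then walk_count n (a+1, b-1) + walk_count n (a-1, b-1) + walk_count n (a-1, b+1)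
      else 0)"
proof (cases "0 \<le> a \<and> 0 \<le> b")
  case False
  show ?thesis by (subst if_not_P[OF False]) (rule walk_count_neg[OF False])
next
  case True
  define A where "A = (\<lambda>P. {ps \<in> qp_walks n. last ps = P})"
  have fA: "finite (A P)" for P using finite_qp_walks by (simp add: A_def)
  have st: "(a - fst P, b - snd P) \<in> stepsA \<longleftrightarrow> P = (a+1, b-1) \<or> P = (a-1,b-1) \<or> P = (a-1,b+1)" for P
    by (cases P) (auto simp: stepsA_def)
  have "{ps \<in> qp_walks (Suc n). last ps = (a,b)} = (\<lambda>ps. ps @ [(a,b)]) ` (A (a+1,b-1) \<union> A (a-1,b-1) \<union> A (a-1,b+1))"
  proof (intro equalityI subsetI)
    fix ps assume "ps \<in> {ps \<in> qp_walks (Suc n). last ps = (a,b)}"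
    then obtain ps' P where eq: "ps = ps' @ [P]" and W: "ps' \<in> qp_walks n"
      and s: "(fst P - fst (last ps'), snd P - snd (last ps')) \<in> stepsA" and l: "last ps = (a,b)"
      unfolding qp_walks_Suc by blast
    have P: "P = (a,b)" using eq l by simp
    have "last ps' = (a+1, b-1) \<or> last ps' = (a-1,b-1) \<or> last ps' = (a-1,b+1)"
      using s st[of "last ps'"] P by simp
    then show "ps \<in> (\<lambda>ps. ps @ [(a,b)]) ` (A (a+1,b-1) \<union> A (a-1,b-1) \<union> A (a-1,b+1))"
      using eq P W by (auto simp: A_def)
  next
    fix ps assume "ps \<in> (\<lambda>ps. ps @ [(a,b)]) ` (A (a+1,b-1) \<union> A (a-1,b-1) \<union> A (a-1,b+1))"
    then obtain ps' where eq: "ps = ps' @ [(a,b)]" and W: "ps' \<in> qp_walks n"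
      and l: "last ps' = (a+1, b-1) \<or> last ps' = (a-1,b-1) \<or> last ps' = (a-1,b+1)"
      by (auto simp: A_def)
    have "(a - fst (last ps'), b - snd (last ps')) \<in> stepsA" using st l by blast
    then show "ps \<in> {ps \<in> qp_walks (Suc n). last ps = (a,b)}"
      unfolding qp_walks_Suc using eq W True by auto
  qed
  moreover have "inj (\<lambda>ps. ps @ [(a,b)] :: (int \<times> int) list)" by (auto intro: injI)
  ultimately have "walk_count (Suc n) (a,b) = card (A (a+1,b-1) \<union> A (a-1,b-1) \<union> A (a-1,b+1))"
    unfolding walk_count_def by (simp add: card_image inj_on_def)
  also have "\<dots> = card (A (a+1,b-1)) + card (A (a-1,b-1)) + card (A (a-1,b+1))"
    by (subst card_Un_disjoint, simp_all add: fA, fastforce simp: A_def)+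
  finally show ?thesis using True by (simp add: A_def walk_count_def)
qed



definition Rg :: "nat \<Rightarrow> (int \<times> int) set" where
  "Rg k = {Q. 0 \<le> fst Q \<and> 0 \<le> snd Q \<and> fst Q + snd Q \<le> int k}"

definition uv :: "nat \<Rightarrow> nat \<Rightarrow> int \<times> int \<Rightarrow> complex" where
  "uv k n Q = (if Q \<in> Rg k then of_nat (walk_count n Q) else 0)"

definition Top :: "nat \<Rightarrow> (int \<times> int \<Rightarrow> complex) \<Rightarrow> int \<times> int \<Rightarrow> complex" where
  "Top k v Q = (if Q \<in> Rg k then v (fst Q + 1, snd Q - 1) + v (fst Q - 1, snd Q - 1) + v (fst Q - 1, snd Q + 1) else 0)"

definition lc :: "nat \<Rightarrow> complex poly \<Rightarrow> nat \<Rightarrow> int \<times> int \<Rightarrow> complex" where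
  "lc k c n Q = (\<Sum>j\<le>degree c. coeff c j * uv k (n + j) Q)"

lemma finite_Rg: "finite (Rg k)"
proof -
  have "Rg k \<subseteq> {0..int k} \<times> {0..int k}" by (auto simp: Rg_def)
  then show ?thesis by (rule finite_subset) auto
qed

lemma uv_eq: "fst Q + snd Q \<le> int k \<Longrightarrow> uv k n Q = of_nat (walk_count n Q)"
  by (cases Q) (auto simp: uv_def Rg_def walk_count_neg)

lemma uv_Suc: "uv k (Suc n) = Top k (uv k n)"
proof
  fix Q :: "int \<times> int"
  obtain a b where Q: "Q = (a,b)" by fastforce
  show "uv k (Suc n) Q = Top k (uv k n) Q"
  proof (cases "Q \<in> Rg k")
    case True
    then have "a + b \<le> int k" "0 \<le> a" "0 \<le> b" by (auto simp: Rg_def Q)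
    then have e: "uv k n (a+1,b-1) = of_nat (walk_count n (a+1,b-1))"
        "uv k n (a-1,b-1) = of_nat (walk_count n (a-1,b-1))"
        "uv k n (a-1,b+1) = of_nat (walk_count n (a-1,b+1))"
      by (auto intro!: uv_eq)
    have l: "uv k (Suc n) Q = of_nat (walk_count (Suc n) (a,b))" using True Q by (simp add: uv_def)
    have r: "Top k (uv k n) Q = of_nat (walk_count n (a+1,b-1)) + of_nat (walk_count n (a-1,b-1)) + of_nat (walk_count n (a-1,b+1))"
      using True Q by (simp add: Top_def e)
    show ?thesis unfolding l r using \<open>0 \<le> a\<close> \<open>0 \<le> b\<close> by (simp add: walk_count_Suc)
  next
    case False
    then show ?thesis by (simp add: uv_def Top_def)
  qed
qed

lemma lc_ext: "degree c \<le> K \<Longrightarrow> lc k c n Q = (\<Sum>j\<le>K. coeff c j * uv k (n + j) Q)"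
  unfolding lc_def
  by (rule sum.mono_neutral_left) (auto simp: coeff_eq_0)

lemma Top_sum: "Top k (\<lambda>Q. \<Sum>j\<in>J. f j * v j Q) = (\<lambda>Q. \<Sum>j\<in>J. f j * Top k (v j) Q)"
  by (auto simp: Top_def fun_eq_iff sum.distrib distrib_left)

lemma Top_zero: "Top k (\<lambda>Q. 0) = (\<lambda>Q. 0)"
  by (auto simp: Top_def fun_eq_iff)

lemma lc_Suc: "lc k c (Suc n) = Top k (lc k c n)"
  unfolding lc_def[abs_def] Top_sum by (simp add: uv_Suc)

lemma lc_all: "lc k c 0 = (\<lambda>Q. 0) \<Longrightarrow> lc k c n = (\<lambda>Q. 0)"
  by (induction n) (simp_all add: lc_Suc Top_zero)

lemma lc_lin: "lc k ([:-\<mu>, 1:] * h) n Q = lc k h (Suc n) Q - \<mu> * lc k h n Q"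
proof -
  define K where "K = Suc (degree h)"
  have d1: "degree ([:-\<mu>, 1:] * h) \<le> K"
    unfolding K_def by (rule order.trans[OF degree_mult_le]) simp
  have eq: "[:-\<mu>, 1:] * h = pCons 0 h - smult \<mu> h"
    by (simp add: mult_pCons_left)
  have "lc k ([:-\<mu>, 1:] * h) n Q = (\<Sum>j\<le>K. coeff ([:-\<mu>, 1:] * h) j * uv k (n + j) Q)"
    by (rule lc_ext[OF d1])
  also have "\<dots> = (\<Sum>j\<le>K. coeff (pCons 0 h) j * uv k (n + j) Q) - \<mu> * (\<Sum>j\<le>K. coeff h j * uv k (n + j) Q)"
    unfolding eq coeff_diff coeff_smult
    by (simp add: sum_subtractf sum_distrib_left algebra_simps del: coeff_pCons)
  also have "(\<Sum>j\<le>K. coeff (pCons 0 h) j * uv k (n + j) Q) = (\<Sum>j\<le>degree h. coeff h j * uv k (Suc n + j) Q)"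
    unfolding K_def by (subst sum.atMost_Suc_shift) simp
  also have "(\<Sum>j\<le>K. coeff h j * uv k (n + j) Q) = lc k h n Q"
    by (rule lc_ext[symmetric]) (simp add: K_def)
  finally show ?thesis by (simp add: lc_def)
qed



interpretation fvs: vector_space "(\<lambda>(c::complex) (f::int \<times> int \<Rightarrow> complex) x. c * f x)"
  by unfold_locales (auto simp: fun_eq_iff algebra_simps)

lemma sum_fun_apply': "(sum f A) x = (\<Sum>a\<in>A. f a x)"
  by (induction A rule: infinite_finite_induct) auto

lemma sum_monom_mult: "(\<Sum>l\<le>j. coeff (monom (1::complex) m) l * f l) = (if m \<le> j then f m else 0)"
proof -
  have "(\<lambda>l. coeff (monom (1::complex) m) l * f l) = (\<lambda>l. if l = m then f l else 0)"
    by (auto simp: coeff_monom fun_eq_iff)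
  then have "(\<Sum>l\<le>j. coeff (monom (1::complex) m) l * f l) = (\<Sum>l\<le>j. if l = m then f l else 0)"
    by metis
  then show ?thesis by (simp add: sum.delta')
qed

lemma exists_ann: "\<exists>c. c \<noteq> 0 \<and> lc k c 0 = (\<lambda>Q. 0)"
proof (cases "\<exists>i j. i < j \<and> j \<le> card (Rg k) \<and> uv k i = uv k j")
  case True
  then obtain i j where ij: "i < j" "uv k i = uv k j" by blast
  define c :: "complex poly" where "c = monom 1 j - monom 1 i"
  have cj: "coeff c j = 1" using ij by (simp add: c_def coeff_monom)
  then have "c \<noteq> 0" by auto
  have dc: "degree c \<le> j" unfolding c_def
    by (rule degree_le) (use ij in \<open>auto simp: coeff_monom\<close>)
  have "lc k c 0 Q = 0" for Q
  proof -
    have "lc k c 0 Q = (\<Sum>l\<le>j. coeff c l * uv k (0 + l) Q)" by (rule lc_ext[OF dc])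
    also have "\<dots> = (\<Sum>l\<le>j. coeff (monom 1 j) l * uv k l Q) - (\<Sum>l\<le>j. coeff (monom 1 i) l * uv k l Q)"
      by (simp add: c_def sum_subtractf[symmetric] left_diff_distrib)
    also have "\<dots> = 0" unfolding sum_monom_mult using ij by simp
    finally show ?thesis .
  qed
  then show ?thesis using \<open>c \<noteq> 0\<close> by blast
next
  case False
  define N where "N = card (Rg k)"
  have inj: "inj_on (uv k) {..N}"
    using False unfolding N_def inj_on_def
    by (metis atMost_iff linorder_neqE_nat)
  define S where "S = uv k ` {..N}"
  have cS: "card S = Suc N" using inj by (simp add: S_def card_image)
  have fS: "finite S" by (simp add: S_def)
  define T where "T = (\<lambda>Q. \<lambda>x. if x = Q then (1::complex) else 0) ` Rg k"
  have cT: "card T \<le> N" unfolding T_def N_def by (rule card_image_le[OF finite_Rg])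
  have fT: "finite T" by (simp add: T_def finite_Rg)
  have sub: "S \<subseteq> fvs.span T"
  proof
    fix v assume "v \<in> S"
    then obtain n where v: "v = uv k n" by (auto simp: S_def)
    have "v = (\<Sum>Q\<in>Rg k. (\<lambda>x. v Q * (if x = Q then 1 else 0)))"
    proof
      fix x
      show "v x = (\<Sum>Q\<in>Rg k. (\<lambda>x. v Q * (if x = Q then 1 else 0))) x"
        unfolding sum_fun_apply'
        by (cases "x \<in> Rg k") (auto simp: v uv_def finite_Rg if_distrib cong: if_cong)
    qed
    also have "\<dots> \<in> fvs.span T"
      by (intro fvs.span_sum fvs.span_scale[unfolded] fvs.span_base) (auto simp: T_def)
    finally show "v \<in> fvs.span T" .
  qed
  have "fvs.dependent S"
  proof (rule ccontr)
    assume "\<not> fvs.dependent S"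
    then have "card S \<le> card T" using fvs.independent_span_bound[OF fT _ sub] by blast
    then show False using cS cT by simp
  qed
  then obtain w where w: "\<exists>v\<in>S. w v \<noteq> 0" and ws: "(\<Sum>v\<in>S. (\<lambda>x. w v * v x)) = 0"
    using fvs.dependent_finite[OF fS] by blast
  define c :: "complex poly" where "c = (\<Sum>j\<le>N. monom (w (uv k j)) j)"
  have cc: "coeff c l = (if l \<le> N then w (uv k l) else 0)" for l
    by (simp add: c_def coeff_sum coeff_monom)
  have "c \<noteq> 0"
  proof
    assume "c = 0"
    from w obtain j where "j \<le> N" "w (uv k j) \<noteq> 0" by (auto simp: S_def)
    then show False using cc[of j] \<open>c = 0\<close> by simp
  qed
  have dc: "degree c \<le> N" by (rule degree_le) (simp add: cc)
  have "lc k c 0 Q = 0" for Q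
  proof -
    have "lc k c 0 Q = (\<Sum>l\<le>N. w (uv k l) * uv k l Q)"
      by (simp add: lc_ext[OF dc] cc)
    also have "\<dots> = (\<Sum>v\<in>S. w v * v Q)"
      unfolding S_def by (subst sum.reindex[OF inj]) simp
    also have "\<dots> = 0" using fun_cong[OF ws, of Q] by (simp add: sum_fun_apply')
    finally show ?thesis .
  qed
  then show ?thesis using \<open>c \<noteq> 0\<close> by blast
qed



lemma sbp_shift:
  fixes F :: "int \<Rightarrow> 'a::comm_monoid_add" and m :: int
  assumes "m \<ge> 0" "F (-1) = 0" "F m = 0"
  shows "(\<Sum>i\<in>{0..m}. F (i - 1)) = (\<Sum>j\<in>{0..m}. F j)"
proof -
  have "(\<Sum>i\<in>{0..m}. F (i - 1)) = (\<Sum>j\<in>{-1..m-1}. F j)"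
    by (rule sum.reindex_bij_witness[of _ "\<lambda>j. j+1" "\<lambda>i. i-1"]) auto
  also have "\<dots> = (\<Sum>j\<in>{-1..m}. F j)"
  proof -
    have "{-1..m} = insert m {-1..m-1}" using assms(1) by auto
    then show ?thesis using assms(3) by simp
  qed
  also have "\<dots> = (\<Sum>j\<in>{0..m}. F j)"
  proof -
    have "{-1..m} = insert (-1) {0..m}" using assms(1) by auto
    then show ?thesis using assms(2) by simp
  qed
  finally show ?thesis .
qed

lemma sbp_shift2:
  fixes F :: "int \<Rightarrow> 'a::comm_monoid_add" and m :: int
  assumes "m \<ge> 0" "F 0 = 0" "F (m+1) = 0"
  shows "(\<Sum>i\<in>{0..m}. F (i + 1)) = (\<Sum>j\<in>{0..m}. F j)"
proof -
  have "(\<Sum>i\<in>{0..m}. F (i + 1)) = (\<Sum>j\<in>{1..m+1}. F j)"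
    by (rule sum.reindex_bij_witness[of _ "\<lambda>j. j-1" "\<lambda>i. i+1"]) auto
  also have "\<dots> = (\<Sum>j\<in>{0..m+1}. F j)"
  proof -
    have "{0..m+1} = insert 0 {1..m+1}" using assms(1) by auto
    then show ?thesis using assms(2) by simp
  qed
  also have "\<dots> = (\<Sum>j\<in>{0..m}. F j)"
  proof -
    have "{0..m+1} = insert (m+1) {0..m}" using assms(1) by auto
    then show ?thesis using assms(3) by simp
  qed
  finally show ?thesis .
qed

lemma sbp:
  fixes f g :: "int \<Rightarrow> 'a::comm_ring" and m :: int
  assumes "m \<ge> 0" "f (-1) = 0" "f (m+1) = 0" "g (-1) = 0" "g (m+1) = 0"
  shows "(\<Sum>i\<in>{0..m}. f i * (g (i-1) + g (i+1))) = (\<Sum>i\<in>{0..m}. g i * (f (i-1) + f (i+1)))"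
proof -
  have 1: "(\<Sum>i\<in>{0..m}. f i * g (i-1)) = (\<Sum>j\<in>{0..m}. f (j+1) * g j)"
    using sbp_shift[of m "\<lambda>j. f (j+1) * g j"] assms by simp
  have 2: "(\<Sum>i\<in>{0..m}. f i * g (i+1)) = (\<Sum>j\<in>{0..m}. f (j-1) * g j)"
    using sbp_shift2[of m "\<lambda>j. f (j-1) * g j"] assms by simp
  show ?thesis
    by (simp add: distrib_left sum.distrib 1 2 mult.commute add.commute)
qed

lemma path_eig:
  fixes x :: "int \<Rightarrow> complex" and m :: int
  assumes m: "m \<ge> 0" and x0: "x (-1) = 0" and x1: "x (m+1) = 0"
    and rec: "\<And>i. 0 \<le> i \<Longrightarrow> i \<le> m \<Longrightarrow> \<mu> * x i = x (i-1) + x (i+1)"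
    and nz: "\<exists>i\<in>{0..m}. x i \<noteq> 0"
  shows "Im \<mu> = 0 \<and> cmod \<mu> \<le> 2 * cos (pi / real_of_int (m+2))"
proof
  define N where "N = (\<Sum>i\<in>{0..m}. (cmod (x i))^2)"
  have Npos: "N > 0"
  proof -
    from nz obtain i where i: "i \<in> {0..m}" "x i \<noteq> 0" by blast
    have "(cmod (x i))^2 \<le> N" unfolding N_def
      by (rule member_le_sum) (use i in auto)
    moreover have "(cmod (x i))^2 > 0" using i by simp
    ultimately show ?thesis by linarith
  qed
  have "(\<Sum>i\<in>{0..m}. cnj (x i) * (x (i-1) + x (i+1))) = (\<Sum>i\<in>{0..m}. x i * (cnj (x (i-1)) + cnj (x (i+1))))"
    using sbp[of m "\<lambda>i. cnj (x i)" x] m x0 x1 by simp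
  moreover have "(\<Sum>i\<in>{0..m}. cnj (x i) * (x (i-1) + x (i+1))) = \<mu> * of_real N"
  proof -
    have "(\<Sum>i\<in>{0..m}. cnj (x i) * (x (i-1) + x (i+1))) = (\<Sum>i\<in>{0..m}. \<mu> * (cnj (x i) * x i))"
      by (rule sum.cong) (auto simp: rec[symmetric])
    also have "\<dots> = \<mu> * of_real N"
      by (simp add: N_def sum_distrib_left complex_norm_square mult.commute del: of_real_power)
    finally show ?thesis .
  qed
  moreover have "(\<Sum>i\<in>{0..m}. x i * (cnj (x (i-1)) + cnj (x (i+1)))) = cnj (\<mu> * of_real N)"
  proof -
    have "(\<Sum>i\<in>{0..m}. x i * (cnj (x (i-1)) + cnj (x (i+1)))) = cnj (\<Sum>i\<in>{0..m}. cnj (x i) * (x (i-1) + x (i+1)))"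
      by simp
    then show ?thesis using calculation(2) by simp
  qed
  ultimately have "\<mu> * of_real N = cnj \<mu> * of_real N" by simp
  then have "\<mu> = cnj \<mu>" using Npos by simp
  then show "Im \<mu> = 0" by (metis complex_cnj_cancel_iff complex_cnj_zero_iff complex_eq_iff complex_cnj_complex_of_real Im_complex_of_real cnj.simps(2) neg_equal_zero)
next
  define lam where "lam = 2 * cos (pi / real_of_int (m+2))"
  define \<phi> where "\<phi> = (\<lambda>i::int. sin (pi * real_of_int (i+1) / real_of_int (m+2)))"
  have mpos: "real_of_int (m+2) > 0" using m by simp
  have phi_pos: "\<phi> i > 0" if "0 \<le> i" "i \<le> m" for i
    unfolding \<phi>_def
  proof (rule sin_gt_zero)
    show "0 < pi * real_of_int (i+1) / real_of_int (m+2)" using that mpos by simp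
    have "real_of_int (i+1) < real_of_int (m+2)" using that by simp
    then have "pi * real_of_int (i+1) < pi * real_of_int (m+2)" by simp
    then show "pi * real_of_int (i+1) / real_of_int (m+2) < pi" using mpos by (simp add: divide_less_eq)
  qed
  have phi0: "\<phi> (-1) = 0" by (simp add: \<phi>_def)
  have phi1: "\<phi> (m+1) = 0"
  proof -
    have "pi * real_of_int (m+1+1) / real_of_int (m+2) = pi" using mpos by (simp add: add.assoc)
    then show ?thesis by (simp add: \<phi>_def)
  qed
  have phirec: "\<phi> (i-1) + \<phi> (i+1) = lam * \<phi> i" for i
  proof -
    define a where "a = pi * real_of_int (i+1) / real_of_int (m+2)"
    define h where "h = pi / real_of_int (m+2)"
    have e: "pi * real_of_int (i - 1 + 1) / real_of_int (m+2) = a - h"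
    proof -
      have "a - h = (pi * real_of_int (i+1) - pi) / real_of_int (m+2)"
        unfolding a_def h_def by (simp add: diff_divide_distrib)
      also have "pi * real_of_int (i+1) - pi = pi * real_of_int (i - 1 + 1)" by (simp add: algebra_simps)
      finally show ?thesis by simp
    qed
    have "\<phi> (i-1) = sin (a - h)" unfolding \<phi>_def e ..
    moreover have "\<phi> (i+1) = sin (a + h)"
    proof -
      have "a + h = (pi * real_of_int (i+1) + pi) / real_of_int (m+2)"
        unfolding a_def h_def by (simp add: add_divide_distrib)
      also have "pi * real_of_int (i+1) + pi = pi * real_of_int (i + 1 + 1)" by (simp add: algebra_simps)
      finally show ?thesis unfolding \<phi>_def by simp
    qed
    moreover have "\<phi> i = sin a" unfolding \<phi>_def a_def by simp
    ultimately show ?thesis unfolding lam_def h_def[symmetric]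
      by (simp add: sin_add sin_diff algebra_simps)
  qed
  define r where "r = (\<lambda>i. cmod (x i) / \<phi> i)"
  define M where "M = Max (r ` {0..m})"
  have fin: "finite (r ` {0..m})" "r ` {0..m} \<noteq> {}" using m by auto
  obtain i0 where i0: "i0 \<in> {0..m}" "r i0 = M"
    using Max_in[OF fin] unfolding M_def by auto
  have rle: "r i \<le> M" if "i \<in> {0..m}" for i
    unfolding M_def using fin that by simp
  have bound: "cmod (x j) \<le> M * \<phi> j" if "-1 \<le> j" "j \<le> m+1" for j
  proof (cases "j = -1 \<or> j = m+1")
    case True
    then show ?thesis using x0 x1 phi0 phi1 by auto
  next
    case False
    then have j: "0 \<le> j" "j \<le> m" using that by auto
    have "cmod (x j) / \<phi> j \<le> M" using rle[of j] j by (simp add: r_def)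
    then show ?thesis using phi_pos[OF j] by (simp add: divide_le_eq)
  qed
  have Mpos: "M > 0"
  proof -
    from nz obtain i where i: "i \<in> {0..m}" "x i \<noteq> 0" by blast
    have "r i > 0" using phi_pos[of i] i by (simp add: r_def)
    then show ?thesis using rle[OF i(1)] by linarith
  qed
  have xi0: "cmod (x i0) = M * \<phi> i0"
    using i0 phi_pos[of i0] by (simp add: r_def field_simps)
  have xi0pos: "cmod (x i0) > 0" using xi0 Mpos phi_pos[of i0] i0 by simp
  have "cmod \<mu> * cmod (x i0) = cmod (x (i0-1) + x (i0+1))"
    using rec[of i0] i0 by (metis atLeastAtMost_iff norm_mult)
  also have "\<dots> \<le> cmod (x (i0-1)) + cmod (x (i0+1))" by (rule norm_triangle_ineq)
  also have "\<dots> \<le> M * \<phi> (i0-1) + M * \<phi> (i0+1)"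
    using bound[of "i0-1"] bound[of "i0+1"] i0 by (intro add_mono) auto
  also have "\<dots> = M * (\<phi> (i0-1) + \<phi> (i0+1))" by (simp add: distrib_left)
  also have "\<dots> = lam * cmod (x i0)" unfolding phirec xi0 by simp
  finally have "cmod \<mu> * cmod (x i0) \<le> lam * cmod (x i0)" .
  then show "cmod \<mu> \<le> 2 * cos (pi / real_of_int (m+2))"
    using xi0pos unfolding lam_def by simp
qed



lemma eig_Top:
  assumes nz: "v \<noteq> (\<lambda>Q. 0)" and supp: "\<And>Q. Q \<notin> Rg k \<Longrightarrow> v Q = 0"
    and ev: "Top k v = (\<lambda>Q. \<mu> * v Q)"
  shows "Im \<mu> = 0 \<and> cmod \<mu> \<le> 2 * cos (pi / (2 + real k))"
proof -
  define Z where "Z = {Q. v Q \<noteq> 0}"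
  have ZR: "Z \<subseteq> Rg k" using supp by (auto simp: Z_def)
  have fZ: "finite Z" using finite_subset[OF ZR finite_Rg] .
  have neZ: "Z \<noteq> {}" using nz by (auto simp: Z_def fun_eq_iff)
  define L where "L = Min ((\<lambda>Q. fst Q + snd Q) ` Z)"
  have "L \<in> (\<lambda>Q. fst Q + snd Q) ` Z" unfolding L_def by (rule Min_in) (use fZ neZ in auto)
  then obtain Q0 where Q0: "Q0 \<in> Z" "fst Q0 + snd Q0 = L" by auto
  have Lmin: "L \<le> fst Q + snd Q" if "v Q \<noteq> 0" for Q
    unfolding L_def using fZ that by (intro Min_le) (auto simp: Z_def)
  have Q0R: "Q0 \<in> Rg k" using Q0 ZR by auto
  have L0: "0 \<le> L" and Lk: "L \<le> int k" using Q0R Q0 by (auto simp: Rg_def)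
  define x where "x = (\<lambda>i. v (L - i, i))"
  have x0: "x (-1) = 0" unfolding x_def by (rule supp) (auto simp: Rg_def)
  have x1: "x (L+1) = 0" unfolding x_def by (rule supp) (auto simp: Rg_def)
  have rec: "\<mu> * x i = x (i-1) + x (i+1)" if "0 \<le> i" "i \<le> L" for i
  proof -
    have inR: "(L - i, i) \<in> Rg k" using that Lk by (auto simp: Rg_def)
    have mid: "v (L - i - 1, i - 1) = 0"
    proof (rule ccontr)
      assume "v (L - i - 1, i - 1) \<noteq> 0"
      from Lmin[OF this] show False by simp
    qed
    have "\<mu> * v (L - i, i) = Top k v (L - i, i)" using fun_cong[OF ev, of "(L-i,i)"] by simp
    also have "\<dots> = v (L - i + 1, i - 1) + v (L - i - 1, i + 1)"
      using inR mid by (simp add: Top_def)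
    finally show ?thesis unfolding x_def by (simp add: algebra_simps)
  qed
  have nzx: "\<exists>i\<in>{0..L}. x i \<noteq> 0"
  proof (intro bexI[of _ "snd Q0"])
    show "x (snd Q0) \<noteq> 0" using Q0 by (cases Q0) (auto simp: x_def Z_def)
    show "snd Q0 \<in> {0..L}" using Q0 Q0R by (auto simp: Rg_def)
  qed
  have pe: "Im \<mu> = 0 \<and> cmod \<mu> \<le> 2 * cos (pi / real_of_int (L+2))"
    by (rule path_eig[OF L0 x0 x1 rec nzx])
  have "cos (pi / real_of_int (L+2)) \<le> cos (pi / (2 + real k))"
  proof (rule cos_monotone_0_pi_le)
    show "0 \<le> pi / (2 + real k)" by simp
    have "real_of_int (L+2) \<le> 2 + real k" using Lk by simp
    moreover have "real_of_int (L+2) > 0" using L0 by simp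
    ultimately show "pi / (2 + real k) \<le> pi / real_of_int (L+2)"
      by (intro divide_left_mono) auto
    have "real_of_int (L+2) \<ge> 1" using L0 by simp
    then show "pi / real_of_int (L+2) \<le> pi" by (simp add: divide_le_eq)
  qed
  then show ?thesis using pe by linarith
qed

lemma min_ann: "\<exists>c. c \<noteq> 0 \<and> lc k c 0 = (\<lambda>Q. 0) \<and> (\<forall>h. h \<noteq> 0 \<and> lc k h 0 = (\<lambda>Q. 0) \<longrightarrow> degree c \<le> degree h)"
proof -
  obtain c0 where "c0 \<noteq> 0 \<and> lc k c0 0 = (\<lambda>Q. 0)" using exists_ann by blast
  then show ?thesis using ex_has_least_nat[of "\<lambda>c. c \<noteq> 0 \<and> lc k c 0 = (\<lambda>Q. 0)" c0 degree] by blast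
qed

lemma root_eig:
  assumes c: "c \<noteq> 0" "lc k c 0 = (\<lambda>Q. 0)" "\<And>h. h \<noteq> 0 \<Longrightarrow> lc k h 0 = (\<lambda>Q. 0) \<Longrightarrow> degree c \<le> degree h"
    and root: "poly c \<mu> = 0"
  shows "Im \<mu> = 0 \<and> cmod \<mu> \<le> 2 * cos (pi / (2 + real k))"
proof -
  obtain h where h: "c = [:-\<mu>, 1:] * h" using root by (auto simp: poly_eq_0_iff_dvd)
  have h0: "h \<noteq> 0" using h c(1) by auto
  have "degree c = degree [:-\<mu>, 1:] + degree h" unfolding h by (rule degree_mult_eq) (use h0 in auto)
  then have dc: "degree c = Suc (degree h)" by simp
  define v where "v = lc k h 0"
  have vnz: "v \<noteq> (\<lambda>Q. 0)"
  proof
    assume "v = (\<lambda>Q. 0)"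
    then have "degree c \<le> degree h" using c(3)[OF h0] by (simp add: v_def)
    then show False using dc by simp
  qed
  have supp: "v Q = 0" if "Q \<notin> Rg k" for Q
    using that by (simp add: v_def lc_def uv_def)
  have "Top k v = (\<lambda>Q. \<mu> * v Q)"
  proof
    fix Q
    have "lc k c 0 Q = 0" using c(2) by simp
    then have "lc k h (Suc 0) Q - \<mu> * lc k h 0 Q = 0" using lc_lin[of k \<mu> h 0 Q] h by simp
    then show "Top k v Q = \<mu> * v Q" by (simp add: v_def lc_Suc[symmetric])
  qed
  then show ?thesis using eig_Top[OF vnz supp] by blast
qed



lemma walk_parity: "walk_count n (a, b) \<noteq> 0 \<Longrightarrow> even (int n + a)"
proof (induction n arbitrary: a b)
  case 0
  then show ?case by (simp add: walk_count_0 split: if_splits)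
next
  case (Suc n)
  then have "walk_count n (a+1, b-1) \<noteq> 0 \<or> walk_count n (a-1, b-1) \<noteq> 0 \<or> walk_count n (a-1, b+1) \<noteq> 0"
    by (simp add: walk_count_Suc split: if_splits)
  then have "even (int n + (a+1)) \<or> even (int n + (a-1))" using Suc.IH by blast
  then show ?case by auto
qed

lemma walk_diag: "walk_count j (int j, int j) \<ge> 1"
proof (induction j)
  case 0
  then show ?case by (simp add: walk_count_0)
next
  case (Suc j)
  have "walk_count (Suc j) (int (Suc j), int (Suc j)) \<ge> walk_count j (int j, int j)"
    by (simp add: walk_count_Suc)
  then show ?case using Suc by simp
qed

lemma walk_step:
  assumes "0 \<le> j" "j \<le> int k" "0 \<le> j'" "j' \<le> int k" "j = j' - 1 \<or> j = j' + 1"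
  shows "walk_count n (int k - j, j) \<le> walk_count (Suc n) (int k - j', j')"
  using assms by (auto simp: walk_count_Suc algebra_simps)

lemma walk_move:
  assumes "0 \<le> j" "j \<le> int k" "0 \<le> t" "t \<le> int k"
  shows "walk_count n (int k - j, j) \<le> walk_count (n + nat \<bar>t - j\<bar>) (int k - t, t)"
  using assms
proof (induction "nat \<bar>t - j\<bar>" arbitrary: j n)
  case 0
  then show ?case by simp
next
  case (Suc d)
  define j' where "j' = (if j < t then j + 1 else j - 1)"
  have j': "0 \<le> j'" "j' \<le> int k" "j = j' - 1 \<or> j = j' + 1" "d = nat \<bar>t - j'\<bar>"
    using Suc.hyps(2) Suc.prems unfolding j'_def by (auto split: if_splits)
  have "walk_count n (int k - j, j) \<le> walk_count (Suc n) (int k - j', j')"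
    by (rule walk_step) (use Suc.prems j' in auto)
  also have "\<dots> \<le> walk_count (Suc n + nat \<bar>t - j'\<bar>) (int k - t, t)"
    by (rule Suc.hyps(1)) (use j' Suc.prems in auto)
  also have "Suc n + nat \<bar>t - j'\<bar> = n + nat \<bar>t - j\<bar>" using Suc.hyps(2) j' by simp
  finally show ?case .
qed

lemma phi_facts:
  fixes m :: int
  assumes m: "m \<ge> 0"
  defines "\<phi> \<equiv> (\<lambda>i::int. sin (pi * real_of_int (i+1) / real_of_int (m+2)))"
  shows "\<And>i. 0 \<le> i \<Longrightarrow> i \<le> m \<Longrightarrow> \<phi> i > 0"
    and "\<phi> (-1) = 0" and "\<phi> (m+1) = 0"
    and "\<And>i. \<phi> (i-1) + \<phi> (i+1) = 2 * cos (pi / real_of_int (m+2)) * \<phi> i"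
proof -
  have mpos: "real_of_int (m+2) > 0" using m by simp
  show "\<phi> i > 0" if "0 \<le> i" "i \<le> m" for i
    unfolding \<phi>_def
  proof (rule sin_gt_zero)
    show "0 < pi * real_of_int (i+1) / real_of_int (m+2)" using that mpos by simp
    have "real_of_int (i+1) < real_of_int (m+2)" using that by simp
    then have "pi * real_of_int (i+1) < pi * real_of_int (m+2)" by simp
    then show "pi * real_of_int (i+1) / real_of_int (m+2) < pi" using mpos by (simp add: divide_less_eq)
  qed
  show "\<phi> (-1) = 0" by (simp add: \<phi>_def)
  show "\<phi> (m+1) = 0"
  proof -
    have "pi * real_of_int (m+1+1) / real_of_int (m+2) = pi" using mpos by (simp add: add.assoc)
    then show ?thesis by (simp add: \<phi>_def)
  qed
  show "\<phi> (i-1) + \<phi> (i+1) = 2 * cos (pi / real_of_int (m+2)) * \<phi> i" for i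
  proof -
    define a where "a = pi * real_of_int (i+1) / real_of_int (m+2)"
    define h where "h = pi / real_of_int (m+2)"
    have e: "pi * real_of_int (i - 1 + 1) / real_of_int (m+2) = a - h"
    proof -
      have "a - h = (pi * real_of_int (i+1) - pi) / real_of_int (m+2)"
        unfolding a_def h_def by (simp add: diff_divide_distrib)
      also have "pi * real_of_int (i+1) - pi = pi * real_of_int (i - 1 + 1)" by (simp add: algebra_simps)
      finally show ?thesis by simp
    qed
    have "\<phi> (i-1) = sin (a - h)" unfolding \<phi>_def e ..
    moreover have "\<phi> (i+1) = sin (a + h)"
    proof -
      have "a + h = (pi * real_of_int (i+1) + pi) / real_of_int (m+2)"
        unfolding a_def h_def by (simp add: add_divide_distrib)
      also have "pi * real_of_int (i+1) + pi = pi * real_of_int (i + 1 + 1)" by (simp add: algebra_simps)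
      finally show ?thesis unfolding \<phi>_def by simp
    qed
    moreover have "\<phi> i = sin a" unfolding \<phi>_def a_def by simp
    ultimately show ?thesis unfolding h_def[symmetric]
      by (simp add: sin_add sin_diff algebra_simps)
  qed
qed

lemma lower_bound:
  assumes k: "even k" "k \<ge> 1" and t: "0 \<le> t" "t \<le> int k"
  shows "\<exists>c>0. \<forall>n\<ge>k div 2. \<exists>d\<le>k. real (walk_count (n + d) (int k - t, t)) \<ge> c * (2 * cos (pi / (2 + real k))) ^ n"
proof -
  define m where "m = int k"
  define lam where "lam = 2 * cos (pi / (2 + real k))"
  have lam_eq: "lam = 2 * cos (pi / real_of_int (m+2))" by (simp add: lam_def m_def add.commute)
  have lampos: "lam > 0"
  proof -
    have "pi / (2 + real k) < pi / 2" by (rule divide_strict_left_mono) (use k in auto)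
    moreover have "pi / (2 + real k) > - (pi / 2)"
      by (rule less_le_trans[of _ 0]) auto
    ultimately show ?thesis unfolding lam_def using cos_gt_zero_pi by simp
  qed
  define \<phi> where "\<phi> = (\<lambda>i::int. sin (pi * real_of_int (i+1) / real_of_int (m+2)))"
  have m0: "m \<ge> 0" by (simp add: m_def)
  have pf1: "\<phi> i > 0" if "0 \<le> i" "i \<le> m" for i using phi_facts(1)[OF m0 that] by (simp add: \<phi>_def)
  have pf2: "\<phi> (-1) = 0" "\<phi> (m+1) = 0" using phi_facts(2,3)[OF m0] by (simp_all add: \<phi>_def)
  have pf4: "\<phi> (i-1) + \<phi> (i+1) = lam * \<phi> i" for i
    using phi_facts(4)[OF m0, of i] by (simp add: \<phi>_def lam_eq)
  note pf = pf1 pf2 pf2 pf4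
  define y where "y = (\<lambda>n (j::int). real (walk_count n (m - j, j)))"
  define s where "s = (\<lambda>n. \<Sum>j\<in>{0..m}. \<phi> j * y n j)"
  have y0: "y n (-1) = 0" "y n (m+1) = 0" for n
    by (simp_all add: y_def walk_count_neg)
  have ynn: "y n j \<ge> 0" for n j by (simp add: y_def)
  have ystep: "y (Suc n) j \<ge> y n (j-1) + y n (j+1)" if "0 \<le> j" "j \<le> m" for n j
    using that by (simp add: y_def walk_count_Suc algebra_simps)
  have sstep: "s (Suc n) \<ge> lam * s n" for n
  proof -
    have "lam * s n = (\<Sum>j\<in>{0..m}. y n j * (lam * \<phi> j))"
      by (simp add: s_def sum_distrib_left mult_ac)
    also have "\<dots> = (\<Sum>j\<in>{0..m}. y n j * (\<phi> (j-1) + \<phi> (j+1)))"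
      by (simp only: pf4)
    also have "\<dots> = (\<Sum>j\<in>{0..m}. \<phi> j * (y n (j-1) + y n (j+1)))"
      by (rule sbp[symmetric]) (use m0 pf y0 in auto)
    also have "\<dots> \<le> s (Suc n)"
      unfolding s_def
      by (rule sum_mono) (use pf1 ystep in \<open>auto intro!: mult_left_mono less_imp_le\<close>)
    finally show ?thesis .
  qed
  define n0 where "n0 = k div 2"
  have spow: "s n \<ge> lam ^ (n - n0) * s n0" if "n \<ge> n0" for n
    using that
  proof (induction n)
    case 0
    then show ?case by simp
  next
    case (Suc n)
    show ?case
    proof (cases "Suc n = n0")
      case True
      then show ?thesis by simp
    next
      case False
      then have "n \<ge> n0" using Suc.prems by simp
      then have "lam ^ (n - n0) * s n0 \<le> s n" using Suc.IH by blast
      then have "lam * (lam ^ (n - n0) * s n0) \<le> lam * s n" using lampos by simp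
      also have "\<dots> \<le> s (Suc n)" by (rule sstep)
      finally show ?thesis using \<open>n \<ge> n0\<close> by (simp add: Suc_diff_le)
    qed
  qed
  have s0pos: "s n0 > 0"
  proof -
    have kk: "int k - int n0 = int n0" using k by (auto simp: n0_def)
    have j: "0 \<le> int n0" "int n0 \<le> m" by (auto simp: m_def n0_def)
    have "y n0 (int n0) \<ge> 1" using walk_diag[of n0] kk by (simp add: y_def m_def)
    then have "\<phi> (int n0) * y n0 (int n0) > 0" using pf1[OF j] by simp
    also have "\<phi> (int n0) * y n0 (int n0) \<le> s n0"
      unfolding s_def by (rule member_le_sum) (use j pf1 ynn in \<open>auto intro!: mult_nonneg_nonneg simp: less_imp_le\<close>)
    finally show ?thesis .
  qed
  define c where "c = s n0 / (lam ^ n0 * (real k + 1))"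
  have cpos: "c > 0" using s0pos lampos by (simp add: c_def)
  have "\<forall>n\<ge>n0. \<exists>d\<le>k. real (walk_count (n + d) (int k - t, t)) \<ge> c * lam ^ n"
  proof (intro allI impI)
    fix n assume n: "n \<ge> n0"
    have fin: "finite ((y n) ` {0..m})" "(y n) ` {0..m} \<noteq> {}" using m0 by auto
    obtain jm where jm: "jm \<in> {0..m}" "y n jm = Max ((y n) ` {0..m})"
      using Max_in[OF fin] by auto
    have yle: "y n j \<le> y n jm" if "j \<in> {0..m}" for j using jm fin that by simp
    have phile: "\<phi> j \<le> 1" for j by (simp add: \<phi>_def)
    have "s n \<le> (\<Sum>j\<in>{0..m}. y n jm)"
      unfolding s_def
    proof (rule sum_mono)
      fix j assume "j \<in> {0..m}"
      then have "\<phi> j * y n j \<le> 1 * y n j" using phile[of j] ynn[of n j] by (intro mult_right_mono) auto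
      also have "\<dots> \<le> y n jm" using yle \<open>j \<in> {0..m}\<close> by simp
      finally show "\<phi> j * y n j \<le> y n jm" .
    qed
    also have "\<dots> = (real k + 1) * y n jm" using m0 by (simp add: m_def)
    finally have sn: "s n \<le> (real k + 1) * y n jm" .
    have "c * lam ^ n = s n0 * lam ^ (n - n0) / (real k + 1)"
      using lampos n by (simp add: c_def field_simps power_diff)
    also have "\<dots> \<le> s n / (real k + 1)" using spow[OF n] by (simp add: divide_right_mono mult.commute)
    also have "\<dots> \<le> y n jm" using sn by (simp add: divide_le_eq mult.commute)
    also have "y n jm \<le> real (walk_count (n + nat \<bar>t - jm\<bar>) (int k - t, t))"
      unfolding y_def m_def using walk_move[of jm k t n] jm t by (auto simp: m_def)
    finally have "c * lam ^ n \<le> real (walk_count (n + nat \<bar>t - jm\<bar>) (int k - t, t))" .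
    moreover have "nat \<bar>t - jm\<bar> \<le> k" using jm t by (auto simp: m_def)
    ultimately show "\<exists>d\<le>k. real (walk_count (n + d) (int k - t, t)) \<ge> c * lam ^ n" by blast
  qed
  then show ?thesis using cpos unfolding lam_def n0_def by blast
qed



definition negf :: "complex fps \<Rightarrow> complex fps" where
  "negf f = Abs_fps (\<lambda>n. (-1)^n * f $ n)"

lemma negf_mult: "negf (f * g) = negf f * negf g"
proof (rule fps_ext)
  fix n
  have "negf (f * g) $ n = (\<Sum>i=0..n. (-1)^n * (f$i * g$(n-i)))"
    by (simp add: negf_def fps_mult_nth sum_distrib_left)
  also have "\<dots> = (\<Sum>i=0..n. ((-1)^i * f$i) * ((-1)^(n-i) * g$(n-i)))"
  proof (rule sum.cong)
    fix i assume "i \<in> {0..n}"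
    then have "(-1::complex)^n = (-1)^i * (-1)^(n-i)" by (simp add: power_add[symmetric])
    then show "(-1)^n * (f$i * g$(n-i)) = ((-1)^i * f$i) * ((-1)^(n-i) * g$(n-i))" by simp
  qed simp
  also have "\<dots> = (negf f * negf g) $ n" by (simp add: negf_def fps_mult_nth)
  finally show "negf (f * g) $ n = (negf f * negf g) $ n" .
qed

lemma fps_of_poly_negp: "fps_of_poly (pcompose p [:0, -1:]) = negf (fps_of_poly (p :: complex poly))"
  by (rule fps_ext) (simp add: negf_def coeff_pcompose_linear)

lemma uv_target: "i \<le> k \<Longrightarrow> uv k n (int k - int i, int i) = of_nat (walk_count n (int k - int i, int i))"
  by (simp add: uv_def Rg_def)

lemma rational:
  assumes c: "c \<noteq> 0" "lc k c 0 = (\<lambda>Q. 0)" and i: "i \<le> k"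
  shows "\<exists>p0. fps_of_poly p0 = fps_of_poly (reflect_poly c) * walk_gf (int k - int i, int i)"
proof -
  define T where "T = (int k - int i, int i)"
  define F where "F = walk_gf T"
  define d where "d = degree c"
  define G where "G = fps_of_poly (reflect_poly c) * F"
  have Fn: "F $ n = uv k n T" for n by (simp add: F_def walk_gf_def T_def uv_target[OF i])
  have Gz: "G $ m = 0" if "m \<ge> d" for m
  proof -
    have "G $ m = (\<Sum>l=0..m. coeff (reflect_poly c) l * uv k (m - l) T)"
      by (simp add: G_def fps_mult_nth Fn)
    also have "\<dots> = (\<Sum>l=0..d. coeff c (d - l) * uv k (m - l) T)"
      by (rule sum.mono_neutral_cong_right) (use that in \<open>auto simp: coeff_reflect_poly d_def\<close>)
    also have "\<dots> = (\<Sum>j=0..d. coeff c j * uv k (m - d + j) T)"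
      by (rule sum.reindex_bij_witness[of _ "\<lambda>j. d - j" "\<lambda>l. d - l"]) (use that in auto)
    also have "\<dots> = lc k c (m - d) T"
      by (simp add: lc_def d_def atLeast0AtMost)
    also have "\<dots> = 0" using lc_all[OF c(2)] by simp
    finally show ?thesis .
  qed
  define p0 where "p0 = (\<Sum>m<d. monom (G $ m) m)"
  have "fps_of_poly p0 = G"
  proof (rule fps_ext)
    fix n
    show "fps_of_poly p0 $ n = G $ n"
      using Gz[of n] by (simp add: p0_def coeff_sum coeff_monom)
  qed
  then show ?thesis unfolding G_def F_def T_def by blast
qed

lemma gf_sym:
  assumes i: "i \<le> k"
  shows "negf (walk_gf (int k - int i, int i)) = fps_const ((-1)^(k+i)) * walk_gf (int k - int i, int i)"
proof (rule fps_ext)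
  fix n
  show "negf (walk_gf (int k - int i, int i)) $ n = (fps_const ((-1)^(k+i)) * walk_gf (int k - int i, int i)) $ n"
  proof (cases "walk_count n (int k - int i, int i) = 0")
    case True
    then show ?thesis by (simp add: negf_def walk_gf_def)
  next
    case False
    then have "even (int n + (int k - int i))" by (rule walk_parity)
    then have "even (n + (k + i))" using i by (simp add: even_add)
    then have "(-1::complex)^n = (-1)^(k+i)" 
      by (metis (no_types, lifting) even_add neg_one_even_power neg_one_odd_power)
    then show ?thesis by (simp add: negf_def walk_gf_def)
  qed
qed



lemma real_pm:
  assumes "Im z = 0" "cmod z = r"
  shows "z = complex_of_real r \<or> z = - complex_of_real r"
proof -
  have "\<bar>Re z\<bar> = r" using assms cmod_eq_Re by simp
  then have "Re z = r \<or> Re z = - r" by auto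
  then show ?thesis using assms(1) by (auto simp: complex_eq_iff)
qed

theorem lemma2p7:
  fixes k i :: nat
  assumes "k \<ge> 1" and "even k" and "i \<le> k"
  shows "\<exists>p q :: complex poly. q \<noteq> 0 \<and> coprime p q \<and>
           fps_of_poly p = fps_of_poly q * walk_gf (int k - int i, int i) \<and>
           {z. poly q z = 0 \<and> (\<forall>w. poly q w = 0 \<longrightarrow> norm z \<le> norm w)}
             = {complex_of_real (1 / (2 * cos (pi / (2 + real k)))),
                - complex_of_real (1 / (2 * cos (pi / (2 + real k))))}"
proof -
  define T where "T = (int k - int i, int i)"
  define F where "F = walk_gf T"
  define lam where "lam = 2 * cos (pi / (2 + real k))"
  define r where "r = 1 / lam"
  have lampos: "lam > 0"
  proof -
    have "pi / (2 + real k) < pi / 2" by (rule divide_strict_left_mono) (use assms in auto)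
    moreover have "pi / (2 + real k) > - (pi / 2)"
      by (rule less_le_trans[of _ 0]) auto
    ultimately show ?thesis unfolding lam_def using cos_gt_zero_pi by simp
  qed
  have rpos: "r > 0" using lampos by (simp add: r_def)
  obtain c where c: "c \<noteq> 0" "lc k c 0 = (\<lambda>Q. 0)"
    and cmin: "\<And>h. h \<noteq> 0 \<Longrightarrow> lc k h 0 = (\<lambda>Q. 0) \<Longrightarrow> degree c \<le> degree h"
    using min_ann[of k] by blast
  define q0 where "q0 = reflect_poly c"
  obtain p0 where p0: "fps_of_poly p0 = fps_of_poly q0 * F"
    using rational[OF c assms(3)] unfolding q0_def F_def T_def by blast
  have q0nz: "q0 \<noteq> 0" using c(1) by (simp add: q0_def)
  define g where "g = gcd p0 q0"
  define p where "p = p0 div g"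
  define q where "q = q0 div g"
  have cop: "coprime p q" unfolding p_def q_def g_def by (rule div_gcd_coprime) (use q0nz in auto)
  have gnz: "g \<noteq> 0" using q0nz by (simp add: g_def)
  have p0eq: "p0 = p * g" by (simp add: p_def g_def)
  have q0eq: "q0 = q * g" by (simp add: q_def g_def)
  have qnz: "q \<noteq> 0" using q0nz q0eq by auto
  have eq: "fps_of_poly p = fps_of_poly q * F"
  proof -
    have "fps_of_poly p * fps_of_poly g = (fps_of_poly q * F) * fps_of_poly g"
      using p0 by (simp add: p0eq q0eq fps_of_poly_mult mult_ac)
    moreover have "fps_of_poly g \<noteq> 0" using gnz fps_of_poly_eq_iff[of g 0] by simp
    ultimately show ?thesis by simp
  qed
  have R1: "Im z = 0 \<and> cmod z \<ge> r" if "poly q z = 0" for z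
  proof -
    have "poly q0 z = 0" using that q0eq by simp
    have z0: "z \<noteq> 0"
    proof
      assume "z = 0"
      then have "lead_coeff c = 0" using \<open>poly q0 z = 0\<close> by (simp add: q0_def)
      then show False using c(1) by simp
    qed
    have "z ^ degree c * poly c (inverse z) = 0"
      using \<open>poly q0 z = 0\<close> poly_reflect_poly_nz[OF z0, of c] by (simp add: q0_def)
    then have "poly c (inverse z) = 0" using z0 by simp
    from root_eig[OF c cmin this]
    have ev: "Im (inverse z) = 0" "cmod (inverse z) \<le> lam" unfolding lam_def by auto
    have "inverse z \<in> \<real>" using ev(1) by (simp add: complex_is_Real_iff)
    then have "Im (inverse (inverse z)) = 0" by (rule Im_inverse)
    then have "Im z = 0" by simp
    moreover have "cmod z \<ge> r"
    proof -
      have "inverse (cmod z) \<le> lam" using ev(2) by (simp add: norm_inverse)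
      moreover have "cmod z > 0" using z0 by simp
      ultimately show ?thesis unfolding r_def using lampos
        by (simp add: field_simps)
    qed
    ultimately show ?thesis by blast
  qed
  have R2: "poly q (-z) = 0" if "poly q z = 0" for z
  proof -
    define \<sigma> where "\<sigma> = (-1::complex)^(k+i)"
    have snz: "\<sigma> \<noteq> 0" by (simp add: \<sigma>_def)
    define p' where "p' = pcompose p [:0, -1:]"
    define q' where "q' = pcompose q [:0, -1:]"
    have e1: "fps_of_poly p' = fps_of_poly q' * (fps_const \<sigma> * F)"
      unfolding p'_def q'_def fps_of_poly_negp eq negf_mult
      using gf_sym[OF assms(3)] by (simp add: F_def T_def \<sigma>_def)
    have "fps_of_poly (p' * q) = fps_of_poly (smult \<sigma> (q' * p))"
      by (simp add: fps_of_poly_mult fps_of_poly_smult eq e1 mult_ac)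
    then have "p' * q = smult \<sigma> (q' * p)" by (simp add: fps_of_poly_eq_iff)
    then have "q dvd smult \<sigma> (q' * p)" by (metis dvd_triv_right)
    then have "q dvd q' * p" using snz by (rule dvd_smult_cancel)
    then have "q dvd q'" using cop by (simp add: coprime_dvd_mult_left_iff coprime_commute)
    then obtain e where "q' = q * e" by (auto elim: dvdE)
    then have "poly q' z = 0" using that by simp
    then show ?thesis by (simp add: q'_def poly_pcompose)
  qed
  have R3: "\<exists>z. poly q z = 0 \<and> cmod z \<le> r"
  proof (rule ccontr)
    assume H: "\<not> (\<exists>z. poly q z = 0 \<and> cmod z \<le> r)"
    define Rts where "Rts = {z. poly q z = 0}"
    have fR: "finite Rts" using poly_roots_finite[OF qnz] by (simp add: Rts_def)
    define R where "R = (if Rts = {} then r + 1 else Min (cmod ` Rts))"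
    have Rgt: "R > r"
    proof (cases "Rts = {}")
      case True
      then show ?thesis by (simp add: R_def)
    next
      case False
      have "Min (cmod ` Rts) \<in> cmod ` Rts" using fR False by (intro Min_in) auto
      then obtain z where "z \<in> Rts" "Min (cmod ` Rts) = cmod z" by auto
      then show ?thesis using H False by (auto simp: R_def Rts_def)
    qed
    have nzR: "poly q z \<noteq> 0" if "cmod z < R" for z
    proof
      assume "poly q z = 0"
      then have zR: "z \<in> Rts" by (simp add: Rts_def)
      then have "R \<le> cmod z" using fR by (auto simp: R_def)
      then show False using that by simp
    qed
    have q00: "fps_of_poly q $ 0 \<noteq> 0"
      using nzR[of 0] Rgt rpos by (simp add: poly_0_coeff_0)
    have Finv: "F = inverse (fps_of_poly q) * fps_of_poly p"
      using inverse_mult_eq_1[OF q00] by (simp add: eq mult.assoc[symmetric])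
    have "fps_conv_radius (inverse (fps_of_poly q)) \<ge> min (ereal R) (fps_conv_radius (fps_of_poly q))"
      by (rule fps_conv_radius_inverse) (simp add: nzR)
    then have ri: "fps_conv_radius (inverse (fps_of_poly q)) \<ge> ereal R" by simp
    have "fps_conv_radius F \<ge> min (fps_conv_radius (inverse (fps_of_poly q))) (fps_conv_radius (fps_of_poly p))"
      unfolding Finv by (rule fps_conv_radius_mult)
    then have rF: "fps_conv_radius F \<ge> ereal R" using ri by simp
    define \<rho> where "\<rho> = (r + R) / 2"
    have \<rho>: "r < \<rho>" "\<rho> < R" using Rgt by (auto simp: \<rho>_def)
    have \<rho>pos: "\<rho> > 0" using \<rho> rpos by simp
    have "ereal (norm (complex_of_real \<rho>)) < fps_conv_radius F"
      using \<rho> \<rho>pos rF by (simp add: less_le_trans[of _ "ereal R"])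
    then have "summable (\<lambda>n. F $ n * complex_of_real \<rho> ^ n)" by (rule summable_fps)
    then have lim: "(\<lambda>n. F $ n * complex_of_real \<rho> ^ n) \<longlonglongrightarrow> 0" by (rule summable_LIMSEQ_zero)
    obtain cc where cc: "cc > 0"
      and lb: "\<And>n. n \<ge> k div 2 \<Longrightarrow> \<exists>d\<le>k. real (walk_count (n + d) T) \<ge> cc * lam ^ n"
      using lower_bound[OF assms(2) assms(1), of "int i"] assms(3) unfolding T_def lam_def by auto
    define \<epsilon> where "\<epsilon> = cc * (min 1 \<rho>) ^ k"
    have \<epsilon>pos: "\<epsilon> > 0" using cc \<rho>pos by (simp add: \<epsilon>_def)
    obtain no where no: "\<And>n. n \<ge> no \<Longrightarrow> norm (F $ n * complex_of_real \<rho> ^ n - 0) < \<epsilon>"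
      using LIMSEQ_D[OF lim \<epsilon>pos] by blast
    define n where "n = max (k div 2) no"
    obtain d where d: "d \<le> k" "real (walk_count (n + d) T) \<ge> cc * lam ^ n"
      using lb[of n] by (auto simp: n_def)
    have "norm (F $ (n + d) * complex_of_real \<rho> ^ (n + d) - 0) < \<epsilon>" by (rule no) (simp add: n_def)
    moreover have "norm (F $ (n + d) * complex_of_real \<rho> ^ (n + d) - 0) = real (walk_count (n + d) T) * \<rho> ^ (n + d)"
      using \<rho>pos by (simp add: F_def walk_gf_def norm_mult norm_power)
    moreover have "real (walk_count (n + d) T) * \<rho> ^ (n + d) \<ge> \<epsilon>"
    proof -
      have lr: "lam * \<rho> \<ge> 1" using \<rho>(1) lampos by (simp add: r_def field_simps)
      have "\<epsilon> = cc * 1 * (min 1 \<rho>) ^ k" by (simp add: \<epsilon>_def)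
      also have "\<dots> \<le> cc * (lam * \<rho>) ^ n * \<rho> ^ d"
      proof (intro mult_mono)
        show "1 \<le> (lam * \<rho>) ^ n" using lr by (rule one_le_power)
        have "(min 1 \<rho>) ^ k \<le> (min 1 \<rho>) ^ d"
          by (rule power_decreasing) (use d \<rho>pos in auto)
        also have "\<dots> \<le> \<rho> ^ d" by (rule power_mono) (use \<rho>pos in auto)
        finally show "(min 1 \<rho>) ^ k \<le> \<rho> ^ d" .
      qed (use cc \<rho>pos lampos in auto)
      also have "\<dots> = (cc * lam ^ n) * \<rho> ^ (n + d)" by (simp add: power_add power_mult_distrib)
      also have "\<dots> \<le> real (walk_count (n + d) T) * \<rho> ^ (n + d)"
        by (rule mult_right_mono) (use d \<rho>pos in auto)
      finally show ?thesis .
    qed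
    ultimately show False by simp
  qed
  obtain z0 where z0: "poly q z0 = 0" "cmod z0 \<le> r" using R3 by blast
  have "cmod z0 = r" using R1[OF z0(1)] z0(2) by simp
  then have "z0 = complex_of_real r \<or> z0 = - complex_of_real r"
    using R1[OF z0(1)] real_pm by blast
  then have rt: "poly q (complex_of_real r) = 0" "poly q (- complex_of_real r) = 0"
    using z0(1) R2 by fastforce+
  have set: "{z. poly q z = 0 \<and> (\<forall>w. poly q w = 0 \<longrightarrow> norm z \<le> norm w)}
             = {complex_of_real r, - complex_of_real r}"
  proof (intro equalityI subsetI)
    fix z assume "z \<in> {z. poly q z = 0 \<and> (\<forall>w. poly q w = 0 \<longrightarrow> norm z \<le> norm w)}"
    then have z: "poly q z = 0" "norm z \<le> norm (complex_of_real r)" using rt by auto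
    then have "cmod z = r" using R1[OF z(1)] rpos by simp
    then show "z \<in> {complex_of_real r, - complex_of_real r}" using R1[OF z(1)] real_pm by blast
  next
    fix z assume "z \<in> {complex_of_real r, - complex_of_real r}"
    then have "poly q z = 0" "norm z = r" using rt rpos by auto
    then show "z \<in> {z. poly q z = 0 \<and> (\<forall>w. poly q w = 0 \<longrightarrow> norm z \<le> norm w)}"
      using R1 by auto
  qed
  show ?thesis
    by (intro exI[of _ p] exI[of _ q] conjI qnz cop)
       (use eq set in \<open>simp_all add: F_def T_def r_def lam_def\<close>)
qed

end
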